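(* Let $x\in J$ with $\|x\|_J=1$. (1) If $x$ is an extreme point of $B_J$, then $\|x|_I\|_J=\|x|_I\|_2$ for every interval $I$ of $\mathbb N$. (2) If $\{I_i\}_{i\in F}$ is an $x$-norming family and $b_i=\sum_{n\in I_i}x(n)$ for $i\in F$, then $\sum_{i\in F}b_ie_{k_i}$ is an extreme point of $B_J$ for every strictly increasing sequence $(k_i)_{i\in F}$ in $\mathbb N$.
   Context: For a real sequence $x=(x(n))_{n\in\mathbb N}$ let $\|x\|_J=\sup\bigl(\sum_{i=1}^n|\sum_{k\in I_i}x(k)|^2\bigr)^{1/2}$ over all $n$ and all families of pairwise disjoint intervals $I_1,\dots,I_n$ of $\mathbb N$ (intervals: nonempty sets of consecutive positive integers, possibly infinite). $J=\{x:\|x\|_J<\infty\}$ with unit vector basis $(e_n)$ and closed unit ball $B_J$; $\|\cdot\|_2$ is the $\ell_2$ norm; for $x\in J$ and any interval $I$ the series $\sum_{k\in I}x(k)$ converges. For $A\subset\mathbb N$, $x|_A$ equals $x$ on $A$ and $0$ off $A$. A family of intervals $\mathcal I=\{I_i\}_{i\in F}$: $F=\{1,\dots,k\}$ or $F=\mathbb N$, each $I_i$ an interval, $\max I_i<\min I_{i+1}$ whenever $i+1\in F$; it is $x$-norming if $(\sum_{i\in F}|\sum_{k\in I_i}x(k)|^2)^{1/2}=\|x\|_J$. *)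

theory Defs
  imports "HOL-Analysis.Analysis"
begin

text \<open>Sequences are functions nat => real; the paper's index set of positive integers
is re-indexed to start at 0 (harmless shift).\<close>

definition is_interval_nat :: "nat set \<Rightarrow> bool" where
  "is_interval_nat I \<longleftrightarrow> I \<noteq> {} \<and> (\<forall>a\<in>I. \<forall>c\<in>I. \<forall>b. a \<le> b \<and> b \<le> c \<longrightarrow> b \<in> I)"

definition interval_sum :: "(nat \<Rightarrow> real) \<Rightarrow> nat set \<Rightarrow> real" where
  "interval_sum x I = (if finite I then sum x I else lim (\<lambda>n. sum x (I \<inter> {..n})))"

text \<open>The James norm (extended-real valued: infinite when x is not in J).\<close>
definition Jnorm_e :: "(nat \<Rightarrow> real) \<Rightarrow> ereal" where
  "Jnorm_e x = (SUP \<I> \<in> {\<I>. finite \<I> \<and> (\<forall>I\<in>\<I>. is_interval_nat I) \<and> disjoint \<I>}.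
                  ereal (sqrt (\<Sum>I\<in>\<I>. (interval_sum x I)\<^sup>2)))"

definition Jspace :: "(nat \<Rightarrow> real) set" where
  "Jspace = {x. Jnorm_e x < \<infinity>}"

definition Jnorm :: "(nat \<Rightarrow> real) \<Rightarrow> real" where
  "Jnorm x = real_of_ereal (Jnorm_e x)"

definition J_ball :: "(nat \<Rightarrow> real) set" where
  "J_ball = {x \<in> Jspace. Jnorm x \<le> 1}"

definition l2norm :: "(nat \<Rightarrow> real) \<Rightarrow> real" where
  "l2norm x = sqrt (\<Sum>k. (x k)\<^sup>2)"

definition restrict_seq :: "(nat \<Rightarrow> real) \<Rightarrow> nat set \<Rightarrow> (nat \<Rightarrow> real)" where
  "restrict_seq x A = (\<lambda>k. if k \<in> A then x k else 0)"

definition interval_family :: "nat set \<Rightarrow> (nat \<Rightarrow> nat set) \<Rightarrow> bool" where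
  "interval_family F \<I> \<longleftrightarrow>
     (F = UNIV \<or> (\<exists>m\<ge>1. F = {..<m})) \<and>
     (\<forall>i\<in>F. is_interval_nat (\<I> i)) \<and>
     (\<forall>i. i \<in> F \<and> Suc i \<in> F \<longrightarrow> (\<forall>a\<in>\<I> i. \<forall>b\<in>\<I> (Suc i). a < b))"

definition norming_family :: "(nat \<Rightarrow> real) \<Rightarrow> nat set \<Rightarrow> (nat \<Rightarrow> nat set) \<Rightarrow> bool" where
  "norming_family x F \<I> \<longleftrightarrow> interval_family F \<I> \<and>
     sqrt (infsum (\<lambda>i. (interval_sum x (\<I> i))\<^sup>2) F) = Jnorm x"

text \<open>The vector sum over i in F of b i times e (k i).\<close>
definition spread_seq :: "nat set \<Rightarrow> (nat \<Rightarrow> nat) \<Rightarrow> (nat \<Rightarrow> real) \<Rightarrow> (nat \<Rightarrow> real)" where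
  "spread_seq F k b = (\<lambda>n. if n \<in> k ` F then b (inv_into F k n) else 0)"

text \<open>Extreme point of a set of sequences (nat => real carries no real_vector instance,
  so the library notion is written out pointwise: x is in S and x does not lie in the
  open segment between two distinct points of S).\<close>
definition seq_extreme_point :: "(nat \<Rightarrow> real) \<Rightarrow> (nat \<Rightarrow> real) set \<Rightarrow> bool" where
  "seq_extreme_point x S \<longleftrightarrow> x \<in> S \<and>
     (\<forall>a\<in>S. \<forall>b\<in>S. a \<noteq> b \<longrightarrow>
        \<not> (\<exists>u::real. 0 < u \<and> u < 1 \<and> x = (\<lambda>n. (1 - u) * a n + u * b n)))"

end

theory Submission
  imports Defs
begin


definition psum :: "(nat \<Rightarrow> real) \<Rightarrow> nat \<Rightarrow> real" where
  "psum x n = (\<Sum>k<n. x k)"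

fun cvar :: "(nat \<Rightarrow> real) \<Rightarrow> nat list \<Rightarrow> real" where
  "cvar P (a # b # r) = (P b - P a)\<^sup>2 + cvar P (b # r)"
| "cvar P _ = 0"

lemma cvar_nonneg: "cvar P c \<ge> 0"
  by (induction P c rule: cvar.induct) auto

lemma cvar_append: "xs \<noteq> [] \<Longrightarrow> cvar P (xs @ ys) = cvar P xs + cvar P (last xs # ys)"
proof (induction xs rule: induct_list012)
  case (3 a b r)
  then show ?case by simp
qed auto

lemma cvar_snoc: "xs \<noteq> [] \<Longrightarrow> cvar P (xs @ [a]) = cvar P xs + (P a - P (last xs))\<^sup>2"
  by (simp add: cvar_append)

lemma cvar_cong: "(\<And>z. z \<in> set c \<Longrightarrow> P z = P' z) \<Longrightarrow> cvar P c = cvar P' c"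
  by (induction P c rule: cvar.induct) auto

lemma cvar_map: "cvar P (map f c) = cvar (P \<circ> f) c"
  by (induction "P \<circ> f" c rule: cvar.induct) auto

lemma cvar_shift: "cvar (\<lambda>j. P j + C) c = cvar P c"
  by (induction P c rule: cvar.induct) auto

lemma cvar_Cons_ge: "cvar P c \<le> cvar P (a # c)"
  by (cases c) auto

lemma cvar_remdups_adj: "cvar P (remdups_adj c) = cvar P c"
proof (induction c rule: remdups_adj.induct)
  case (3 x y xs)
  show ?case
  proof (cases "x = y")
    case False
    have "remdups_adj (y # xs) = y # tl (remdups_adj (y # xs))" by simp
    then have "cvar P (x # remdups_adj (y # xs)) = (P y - P x)\<^sup>2 + cvar P (remdups_adj (y # xs))"
      by (metis cvar.simps(1))
    then show ?thesis using 3 False by simp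
  qed (use 3 in simp)
qed auto

lemma sorted_remdups_adj_strict: "sorted c \<Longrightarrow> sorted_wrt (<) (remdups_adj c)"
proof (induction c rule: remdups_adj.induct)
  case (3 x y xs)
  show ?case
  proof (cases "x = y")
    case True
    then show ?thesis using 3 by simp
  next
    case False
    have s: "sorted (y # xs)" using 3(3) by simp
    have "\<forall>z\<in>set (remdups_adj (y # xs)). x < z"
      using s 3(3) False by (auto simp: order.strict_iff_order)
    moreover have "sorted_wrt (<) (remdups_adj (y # xs))" using 3(2) s False by simp
    ultimately show ?thesis using False by simp
  qed
qed auto

lemma cvar_upt: "cvar (psum x) [0..<Suc N] = (\<Sum>k<N. (x k)\<^sup>2)"
proof (induction N)
  case (Suc N)
  have "[0..<Suc (Suc N)] = [0..<Suc N] @ [Suc N]" by simp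
  then have "cvar (psum x) [0..<Suc (Suc N)] = cvar (psum x) [0..<Suc N] + (psum x (Suc N) - psum x N)\<^sup>2"
    using cvar_snoc[of "[0..<Suc N]" "psum x" "Suc N"] by simp
  moreover have "psum x (Suc N) - psum x N = x N" by (simp add: psum_def)
  ultimately show ?case using Suc by simp
qed simp

lemma psum_ivl: "a \<le> b \<Longrightarrow> sum x {a..<b} = psum x b - psum x a"
  unfolding psum_def using sum_diff_nat_ivl[of 0 a b x] by (simp add: atLeast0LessThan)

lemma sorted_wrt_last_max: "sorted_wrt (<) (c::nat list) \<Longrightarrow> z \<in> set c \<Longrightarrow> z \<le> last c"
proof (induction c rule: rev_induct)
  case (snoc a xs)
  then show ?case by (cases "z = a") (auto simp: sorted_wrt_append intro: less_imp_le)
qed simp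

lemma sorted_last_max: "sorted (c::nat list) \<Longrightarrow> z \<in> set c \<Longrightarrow> z \<le> last c"
proof (induction c rule: rev_induct)
  case (snoc a xs)
  then show ?case by (auto simp: sorted_append)
qed simp

lemma sorted_hd_min: "sorted (c::nat list) \<Longrightarrow> z \<in> set c \<Longrightarrow> hd c \<le> z"
  by (cases c) auto

lemma core_arith:
  fixes K V e a b c d :: real
  assumes "e > 0" "K + (d-a)\<^sup>2 \<le> V" "K + (c-a)\<^sup>2 + (d-c)\<^sup>2 \<le> V" "K + (b-a)\<^sup>2 + (d-b)\<^sup>2 \<le> V"
    "K + (c-a)\<^sup>2 + (d-b)\<^sup>2 - (c-b)\<^sup>2 > V + e"
  shows False
proof -
  have 1: "(b-a)*(c-b) > 0" using assms(4,5,1) by (simp add: power2_eq_square algebra_simps)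
  have 2: "(c-b)*(d-c) > 0" using assms(3,5,1) by (simp add: power2_eq_square algebra_simps)
  have 3: "(b-a)*(d-c) < 0" using assms(2,5,1) by (simp add: power2_eq_square algebra_simps)
  have "((b-a)*(c-b))*((c-b)*(d-c)) > 0" using 1 2 by simp
  moreover have "((b-a)*(c-b))*((c-b)*(d-c)) = ((b-a)*(d-c))*((c-b)*(c-b))" by (simp add: algebra_simps)
  moreover have "((b-a)*(d-c))*((c-b)*(c-b)) \<le> 0" using 3 by (simp add: mult_nonpos_nonneg)
  ultimately show False by linarith
qed



definition Fam :: "nat set set set" where
  "Fam = {\<I>. finite \<I> \<and> (\<forall>I\<in>\<I>. is_interval_nat I) \<and> disjoint \<I>}"

definition Qf :: "(nat \<Rightarrow> real) \<Rightarrow> nat set set \<Rightarrow> real" where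
  "Qf x \<I> = (\<Sum>I\<in>\<I>. (interval_sum x I)\<^sup>2)"

lemma Jnorm_e_alt: "Jnorm_e x = (SUP \<I>\<in>Fam. ereal (sqrt (Qf x \<I>)))"
  unfolding Jnorm_e_def Fam_def Qf_def by simp

lemma Qf_nonneg: "Qf x \<I> \<ge> 0"
  unfolding Qf_def by (simp add: sum_nonneg)

lemma empty_Fam: "{} \<in> Fam" by (simp add: Fam_def)

lemma Jnorm_e_ge: "\<I> \<in> Fam \<Longrightarrow> ereal (sqrt (Qf x \<I>)) \<le> Jnorm_e x"
  unfolding Jnorm_e_alt by (rule SUP_upper)

lemma Jnorm_e_nonneg: "0 \<le> Jnorm_e x"
  using Jnorm_e_ge[OF empty_Fam, of x] by (simp add: Qf_def zero_ereal_def)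

lemma Jnorm_e_eq: "x \<in> Jspace \<Longrightarrow> Jnorm_e x = ereal (Jnorm x)"
  unfolding Jspace_def Jnorm_def using Jnorm_e_nonneg[of x]
  by (cases "Jnorm_e x") auto

lemma Jnorm_nonneg: "Jnorm x \<ge> 0"
  unfolding Jnorm_def using Jnorm_e_nonneg[of x] by (cases "Jnorm_e x") auto

lemma Qf_le: "x \<in> Jspace \<Longrightarrow> \<I> \<in> Fam \<Longrightarrow> Qf x \<I> \<le> (Jnorm x)\<^sup>2"
proof -
  assume a: "x \<in> Jspace" "\<I> \<in> Fam"
  have "ereal (sqrt (Qf x \<I>)) \<le> ereal (Jnorm x)" using Jnorm_e_ge[OF a(2), of x] Jnorm_e_eq[OF a(1)] by simp
  then have "sqrt (Qf x \<I>) \<le> Jnorm x" by simp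
  then show ?thesis using Qf_nonneg[of x \<I>] Jnorm_nonneg[of x]
    by (metis real_le_lsqrt real_sqrt_ge_zero sqrt_le_D)
qed

lemma Jnorm_le:
  assumes "\<And>\<I>. \<I> \<in> Fam \<Longrightarrow> Qf x \<I> \<le> M" "0 \<le> M"
  shows "x \<in> Jspace" "Jnorm x \<le> sqrt M"
proof -
  have "Jnorm_e x \<le> ereal (sqrt M)"
    unfolding Jnorm_e_alt by (rule SUP_least) (use assms in \<open>simp add: real_sqrt_le_iff\<close>)
  then show "x \<in> Jspace" unfolding Jspace_def by auto
  then show "Jnorm x \<le> sqrt M" using \<open>Jnorm_e x \<le> ereal (sqrt M)\<close> Jnorm_e_eq by simp
qed

lemma interval_mem: "is_interval_nat I \<Longrightarrow> a \<in> I \<Longrightarrow> c \<in> I \<Longrightarrow> a \<le> b \<Longrightarrow> b \<le> c \<Longrightarrow> b \<in> I"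
  unfolding is_interval_nat_def by blast

lemma interval_finite: "is_interval_nat I \<Longrightarrow> finite I \<Longrightarrow> I = {Min I..Max I}"
proof -
  assume a: "is_interval_nat I" "finite I"
  have ne: "I \<noteq> {}" using a unfolding is_interval_nat_def by auto
  have m: "Min I \<in> I" "Max I \<in> I" using ne a(2) by auto
  show ?thesis
  proof
    show "I \<subseteq> {Min I..Max I}" using a(2) by auto
    show "{Min I..Max I} \<subseteq> I"
    proof
      fix z assume "z \<in> {Min I..Max I}"
      then show "z \<in> I" by (intro interval_mem[OF a(1) m]) auto
    qed
  qed
qed

lemma interval_infinite: "is_interval_nat I \<Longrightarrow> infinite I \<Longrightarrow> I = {(LEAST z. z \<in> I)..}"
proof -
  assume a: "is_interval_nat I" "infinite I"
  have ne: "I \<noteq> {}" using a unfolding is_interval_nat_def by auto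
  then obtain z0 where "z0 \<in> I" by auto
  then have m: "(LEAST z. z \<in> I) \<in> I" by (rule LeastI)
  show ?thesis
  proof
    show "I \<subseteq> {(LEAST z. z \<in> I)..}" by (auto intro: Least_le)
  next
    show "{(LEAST z. z \<in> I)..} \<subseteq> I"
    proof
      fix z assume z: "z \<in> {(LEAST z. z \<in> I)..}"
      obtain w where "w \<in> I" "w > z" using a(2) unfolding infinite_nat_iff_unbounded by blast
      then show "z \<in> I" using z by (intro interval_mem[OF a(1) m \<open>w \<in> I\<close>]) auto
    qed
  qed
qed

lemma is_interval_atLeastLessThan: "a < b \<Longrightarrow> is_interval_nat {a..<b}"
  unfolding is_interval_nat_def by auto

lemma is_interval_atLeast: "is_interval_nat {a..}"
  unfolding is_interval_nat_def by auto

lemma isum_ivl: "a \<le> b \<Longrightarrow> interval_sum x {a..<b} = psum x b - psum x a"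
  unfolding interval_sum_def by (simp add: psum_ivl)

lemma isum_atLeast:
  assumes "psum x \<longlonglongrightarrow> L"
  shows "interval_sum x {a..} = L - psum x a"
proof -
  have ev: "eventually (\<lambda>n. psum x (Suc n) - psum x a = sum x ({a..} \<inter> {..n})) sequentially"
  proof (rule eventually_sequentiallyI[of a])
    fix n assume "a \<le> n"
    then have "{a..} \<inter> {..n} = {a..<Suc n}" by auto
    then show "psum x (Suc n) - psum x a = sum x ({a..} \<inter> {..n})"
      using psum_ivl[of a "Suc n" x] \<open>a \<le> n\<close> by simp
  qed
  have "(\<lambda>n. psum x (Suc n) - psum x a) \<longlonglongrightarrow> L - psum x a"
    by (intro tendsto_intros LIMSEQ_Suc assms)
  then have "(\<lambda>n. sum x ({a..} \<inter> {..n})) \<longlonglongrightarrow> L - psum x a"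
    using Lim_transform_eventually[OF _ ev] by blast
  moreover have "infinite {a..}"
  proof
    assume "finite {a..}"
    moreover have "a \<le> Max {a..}" using \<open>finite {a..}\<close> by (rule Max_ge) simp
    then have "Suc (Max {a..}) \<in> {a..}" by simp
    from Max_ge[OF \<open>finite {a..}\<close> this] show False by simp
  qed
  ultimately show ?thesis unfolding interval_sum_def by (simp add: limI)
qed



lemma Fam_insert:
  assumes "\<I> \<in> Fam" "is_interval_nat J" "\<forall>I\<in>\<I>. I \<inter> J = {}"
  shows "insert J \<I> \<in> Fam"
  using assms unfolding Fam_def by (auto simp: pairwise_insert disjnt_def Int_commute)

lemma chain_fam:
  "sorted c \<Longrightarrow> \<exists>\<I>\<in>Fam. Qf x \<I> = cvar (psum x) c \<and> (\<forall>I\<in>\<I>. \<forall>z\<in>I. hd c \<le> z)"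
proof (induction c rule: induct_list012)
  case 1
  show ?case using empty_Fam by (intro bexI[of _ "{}"]) (simp_all add: Qf_def)
next
  case (2 a)
  show ?case using empty_Fam by (intro bexI[of _ "{}"]) (simp_all add: Qf_def)
next
  case (3 a b r)
  have s: "sorted (b # r)" "a \<le> b" using 3(3) by auto
  obtain \<I> where I: "\<I> \<in> Fam" "Qf x \<I> = cvar (psum x) (b # r)" "\<forall>I\<in>\<I>. \<forall>z\<in>I. b \<le> z"
    using 3(2)[OF s(1)] by auto
  show ?case
  proof (cases "a = b")
    case True
    then show ?thesis using I by auto
  next
    case False
    then have ab: "a < b" using s(2) by simp
    let ?J = "insert {a..<b} \<I>"
    have nin: "{a..<b} \<notin> \<I>" using I(3) ab by fastforce
    have "\<forall>I\<in>\<I>. I \<inter> {a..<b} = {}" using I(3) by fastforce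
    then have "?J \<in> Fam" using I(1) ab by (intro Fam_insert is_interval_atLeastLessThan)
    moreover have "Qf x ?J = cvar (psum x) (a # b # r)"
      using I(1) I(2) nin ab unfolding Qf_def Fam_def by (simp add: isum_ivl)
    moreover have "\<forall>I\<in>?J. \<forall>z\<in>I. hd (a # b # r) \<le> z" using I(3) ab by fastforce
    ultimately show ?thesis by blast
  qed
qed

lemma chain_le_Jnorm: "x \<in> Jspace \<Longrightarrow> sorted c \<Longrightarrow> cvar (psum x) c \<le> (Jnorm x)\<^sup>2"
  using chain_fam[of c x] Qf_le by force

lemma fam_chain_fin:
  "\<I> \<in> Fam \<Longrightarrow> (\<forall>I\<in>\<I>. finite I \<and> I \<subseteq> {..<B}) \<Longrightarrow>
   \<exists>c. sorted c \<and> set c \<subseteq> {..B} \<and> Qf x \<I> \<le> cvar (psum x) c"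
proof (induction "card \<I>" arbitrary: \<I> B rule: less_induct)
  case less
  show ?case
  proof (cases "\<I> = {}")
    case True
    then show ?thesis by (intro exI[of _ "[]"]) (simp add: Qf_def)
  next
    case False
    have fin: "finite \<I>" using less(2) by (simp add: Fam_def)
    have "Max (Max ` \<I>) \<in> Max ` \<I>" using fin False by simp
    then obtain I0 where I0: "I0 \<in> \<I>" "Max I0 = Max (Max ` \<I>)" by auto
    have maxI0: "\<forall>J\<in>\<I>. Max J \<le> Max I0" using I0 fin by simp
    have iv: "is_interval_nat I0" using less(2) I0(1) by (simp add: Fam_def)
    have fI0: "finite I0" using less(3) I0(1) by auto
    define lo where "lo = Min I0"
    define hi where "hi = Max I0"
    have I0eq: "I0 = {lo..hi}" using interval_finite[OF iv fI0] by (simp add: lo_def hi_def)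
    have lohi: "lo \<le> hi"
      using iv I0eq unfolding is_interval_nat_def by auto
    have "hi \<in> I0" using I0eq lohi by simp
    then have hiB: "hi < B" using less(3) I0(1) by blast
    let ?R = "\<I> - {I0}"
    have cardR: "card ?R < card \<I>" using fin I0(1) by (rule card_Diff1_less)
    have RFam: "?R \<in> Fam" using less(2) unfolding Fam_def by (auto intro: pairwise_subset)
    have Rsub: "\<forall>J\<in>?R. finite J \<and> J \<subseteq> {..<lo}"
    proof (intro ballI conjI)
      fix J assume J: "J \<in> ?R"
      show "finite J" using J less(3) by auto
      show "J \<subseteq> {..<lo}"
      proof
        fix z assume z: "z \<in> J"
        have "disjnt J I0" using less(2) J I0(1) unfolding Fam_def by (auto simp: pairwise_def)
        moreover have "z \<le> hi" using maxI0 J z \<open>finite J\<close> hi_def by (meson DiffD1 Max_ge le_trans)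
        ultimately show "z \<in> {..<lo}" using z I0eq by (auto simp: disjnt_def)
      qed
    qed
    obtain c where c: "sorted c" "set c \<subseteq> {..lo}" "Qf x ?R \<le> cvar (psum x) c"
      using less(1)[OF cardR RFam Rsub] by blast
    let ?c = "c @ [lo, Suc hi]"
    have "sorted ?c" using c(1,2) lohi by (auto simp: sorted_append)
    moreover have "set ?c \<subseteq> {..B}" using c(2) hiB lohi by auto
    moreover have "cvar (psum x) ?c \<ge> cvar (psum x) c + (psum x (Suc hi) - psum x lo)\<^sup>2"
    proof (cases "c = []")
      case True then show ?thesis by simp
    next
      case False then show ?thesis by (simp add: cvar_append)
    qed
    moreover have "Qf x \<I> = (psum x (Suc hi) - psum x lo)\<^sup>2 + Qf x ?R"
    proof -
      have "Qf x \<I> = (interval_sum x I0)\<^sup>2 + Qf x ?R"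
        unfolding Qf_def using fin I0(1) by (simp add: sum.remove)
      moreover have "I0 = {lo..<Suc hi}" using I0eq by auto
      ultimately show ?thesis using lohi by (simp add: isum_ivl)
    qed
    ultimately show ?thesis using c(3) by (intro exI[of _ ?c]) auto
  qed
qed

lemma Jnorm_le_chain:
  assumes conv: "convergent (psum x)" and bd: "\<And>c. sorted c \<Longrightarrow> cvar (psum x) c \<le> M" and M: "0 \<le> M"
  shows "x \<in> Jspace" "Jnorm x \<le> sqrt M"
proof -
  have fin_case: "Qf x \<I> \<le> M" if IF: "\<I> \<in> Fam" "\<forall>I\<in>\<I>. finite I" for \<I>
  proof -
    have fu: "finite (\<Union>\<I>)" using IF by (simp add: Fam_def)
    define B where "B = Suc (Max (insert 0 (\<Union>\<I>)))"
    have "\<forall>I\<in>\<I>. finite I \<and> I \<subseteq> {..<B}"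
      using IF fu unfolding B_def by (auto intro!: le_imp_less_Suc Max_ge)
    then obtain c where "sorted c" "Qf x \<I> \<le> cvar (psum x) c"
      using fam_chain_fin[OF IF(1)] by blast
    then show ?thesis using bd by force
  qed
  have "Qf x \<I> \<le> M" if I: "\<I> \<in> Fam" for \<I>
  proof (cases "\<forall>I\<in>\<I>. finite I")
    case True then show ?thesis using fin_case I by blast
  next
    case False
    then obtain I1 where I1: "I1 \<in> \<I>" "infinite I1" by blast
    define a where "a = (LEAST z. z \<in> I1)"
    have iv: "is_interval_nat I1" using I I1 by (simp add: Fam_def)
    have I1eq: "I1 = {a..}" using interval_infinite[OF iv I1(2)] a_def by simp
    let ?R = "\<I> - {I1}"
    have fin: "finite \<I>" using I by (simp add: Fam_def)
    have Rsub: "\<forall>J\<in>?R. J \<subseteq> {..<a}"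
    proof (intro ballI subsetI)
      fix J z assume J: "J \<in> ?R" and z: "z \<in> J"
      have "disjnt J I1" using I J I1(1) unfolding Fam_def by (auto simp: pairwise_def)
      then show "z \<in> {..<a}" using z I1eq by (auto simp: disjnt_def)
    qed
    obtain L where L: "psum x \<longlonglongrightarrow> L" using conv by (auto simp: convergent_def)
    have QI: "Qf x \<I> = (L - psum x a)\<^sup>2 + Qf x ?R"
    proof -
      have "Qf x \<I> = (interval_sum x I1)\<^sup>2 + Qf x ?R"
        unfolding Qf_def using fin I1(1) by (simp add: sum.remove)
      then show ?thesis using I1eq isum_atLeast[OF L] by simp
    qed
    have bN: "(psum x N - psum x a)\<^sup>2 + Qf x ?R \<le> M" if N: "N > a" for N
    proof -
      let ?J = "insert {a..<N} ?R"
      have nin: "{a..<N} \<notin> ?R"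
      proof
        assume "{a..<N} \<in> ?R"
        then have "{a..<N} \<subseteq> {..<a}" using Rsub by blast
        then have "a \<in> {..<a}" using N by auto
        then show False by simp
      qed
      have RFam: "?R \<in> Fam" using I unfolding Fam_def by (auto intro: pairwise_subset)
      have "\<forall>I\<in>?R. I \<inter> {a..<N} = {}"
      proof (intro ballI equalityI subsetI)
        fix I z assume Iz: "I \<in> ?R" "z \<in> I \<inter> {a..<N}"
        then have "I \<subseteq> {..<a}" using Rsub by blast
        then show "z \<in> {}" using Iz(2) by auto
      qed simp
      then have "?J \<in> Fam" using RFam N by (intro Fam_insert is_interval_atLeastLessThan)
      moreover have "\<forall>I\<in>?J. finite I"
        using Rsub by (metis finite_atLeastLessThan finite_lessThan finite_subset insert_iff)
      ultimately have "Qf x ?J \<le> M" by (rule fin_case)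
      moreover have "Qf x ?J = (psum x N - psum x a)\<^sup>2 + Qf x ?R"
        unfolding Qf_def using fin nin N by (simp add: isum_ivl)
      ultimately show ?thesis by simp
    qed
    have "(\<lambda>N. (psum x N - psum x a)\<^sup>2 + Qf x ?R) \<longlonglongrightarrow> (L - psum x a)\<^sup>2 + Qf x ?R"
      by (intro tendsto_intros L)
    then have "(L - psum x a)\<^sup>2 + Qf x ?R \<le> M"
      by (rule LIMSEQ_le_const2) (use bN in \<open>auto intro: exI[of _ "Suc a"]\<close>)
    then show ?thesis using QI by simp
  qed
  then show "x \<in> Jspace" "Jnorm x \<le> sqrt M" using Jnorm_le[OF _ M] by blast+
qed

lemma psum_convergent:
  assumes x: "x \<in> Jspace"
  shows "convergent (psum x)"
proof (rule ccontr)
  assume nc: "\<not> convergent (psum x)"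
  then have "\<not> Cauchy (psum x)" using Cauchy_convergent_iff by blast
  then obtain e where e: "e > 0" "\<forall>M. \<exists>m\<ge>M. \<exists>n\<ge>M. \<not> dist (psum x m) (psum x n) < e"
    unfolding Cauchy_def by blast
  have "\<exists>c. sorted c \<and> c \<noteq> [] \<and> cvar (psum x) c \<ge> real K * e\<^sup>2" for K
  proof (induction K)
    case 0
    then show ?case by (intro exI[of _ "[0]"]) simp
  next
    case (Suc K)
    then obtain c where c: "sorted c" "c \<noteq> []" "cvar (psum x) c \<ge> real K * e\<^sup>2" by blast
    obtain m n where mn: "m \<ge> last c" "n \<ge> last c" "\<not> dist (psum x m) (psum x n) < e"
      using e(2) by blast
    define p where "p = min m n"
    define q where "q = max m n"
    have pq: "\<bar>psum x q - psum x p\<bar> \<ge> e"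
      using mn(3) unfolding p_def q_def dist_real_def by (cases "m \<le> n") (auto simp: abs_minus_commute)
    then have "(psum x q - psum x p)\<^sup>2 \<ge> e\<^sup>2"
      using e(1) by (metis abs_le_square_iff abs_of_pos)
    moreover have "cvar (psum x) (c @ [p, q]) \<ge> cvar (psum x) c + (psum x q - psum x p)\<^sup>2"
      using c(2) by (simp add: cvar_append)
    moreover have "sorted (c @ [p, q])"
    proof -
      have "\<forall>z\<in>set c. z \<le> p" using mn sorted_last_max[OF c(1)] unfolding p_def by force
      moreover have "p \<le> q" unfolding p_def q_def by simp
      ultimately show ?thesis using c(1) by (auto simp: sorted_append)
    qed
    ultimately show ?case using c(3)
      by (intro exI[of _ "c @ [p, q]"]) (auto simp: algebra_simps)
  qed
  then have bd: "real K * e\<^sup>2 \<le> (Jnorm x)\<^sup>2" for K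
    using chain_le_Jnorm[OF x] by (meson order_trans)
  obtain K where "real K > (Jnorm x)\<^sup>2 / e\<^sup>2" using reals_Archimedean2 by blast
  then have "real K * e\<^sup>2 > (Jnorm x)\<^sup>2" using e(1) by (simp add: field_simps)
  then show False using bd[of K] by simp
qed



lemma psum_Suc: "psum x (Suc m) = psum x m + x m"
  by (simp add: psum_def)

lemma psum_0[simp]: "psum x 0 = 0"
  by (simp add: psum_def)

lemma cvar_split: "cvar P (l @ m # r) = cvar P (l @ [m]) + cvar P (m # r)"
proof (cases "l = []")
  case False
  then show ?thesis using cvar_append[OF False, of P "m # r"] cvar_append[OF False, of P "[m]"] by simp
qed simp

lemma strict_app3:
  assumes "sorted_wrt (<) l" "\<forall>z\<in>set l. z < (m::nat)" "sorted_wrt (<) (m # r)"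
  shows "sorted_wrt (<) (l @ m # r)"
  using assms by (auto simp: sorted_wrt_append intro: less_trans)

lemma core:
  fixes x :: "nat \<Rightarrow> real"
  assumes W: "\<And>m e. e > 0 \<Longrightarrow> \<exists>w. sorted_wrt (<) w \<and> m \<in> set w \<and> cvar (psum x) w > 1 - e"
    and B: "\<And>c. sorted_wrt (<) c \<Longrightarrow> cvar (psum x) c \<le> 1"
  shows "sorted_wrt (<) c \<Longrightarrow> c \<noteq> [] \<Longrightarrow> last c = n \<Longrightarrow> cvar (psum x) c \<le> (\<Sum>k<n. (x k)\<^sup>2)"
proof (induction n arbitrary: c rule: less_induct)
  case (less n)
  define P where "P = psum x"
  define F where "F = (\<lambda>n. \<Sum>k<n. (x k)\<^sup>2)"
  have Fnn: "F m \<ge> 0" for m unfolding F_def by (simp add: sum_nonneg)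
  define c' where "c' = butlast c"
  have c: "c = c' @ [n]" using less(3,4) unfolding c'_def by (metis append_butlast_last_id)
  have sc': "sorted_wrt (<) c'" "\<forall>z\<in>set c'. z < n" using less(2) c by (auto simp: sorted_wrt_append)
  show ?case
  proof (cases "c' = []")
    case True
    then show ?thesis using c by (simp add: sum_nonneg)
  next
    case False
    define p where "p = last c'"
    have pn: "p < n" using sc'(2) False p_def by simp
    have n1: "n = Suc (n - 1)" using pn by simp
    have Fn: "F n = F (n - 1) + (P n - P (n - 1))\<^sup>2"
      unfolding F_def P_def using n1 psum_Suc[of x "n - 1"] by (metis add_diff_cancel_left' add.commute sum.lessThan_Suc)
    have cvc: "cvar P c = cvar P c' + (P n - P p)\<^sup>2" using c False p_def by (simp add: cvar_snoc)
    have cmax: "\<forall>z\<in>set c'. z \<le> p" using sorted_wrt_last_max[OF sc'(1)] p_def by blast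
    show ?thesis
    proof (cases "p = n - 1")
      case True
      have lc: "last c' = n - 1" using True p_def by simp
      have "n - 1 < n" using pn by simp
      from less(1)[OF this sc'(1) False lc] have "cvar P c' \<le> F (n - 1)" unfolding P_def F_def .
      then show ?thesis using cvc Fn True unfolding P_def F_def by simp
    next
      case False
      with pn have pn1: "p < n - 1" by simp
      show ?thesis
      proof (rule ccontr)
        assume "\<not> cvar (psum x) c \<le> (\<Sum>k<n. (x k)\<^sup>2)"
        then have "cvar P c > F n" unfolding P_def F_def by simp
        define d where "d = cvar P c - F n"
        have d0: "d > 0" using \<open>cvar P c > F n\<close> d_def by simp
        obtain w where w: "sorted_wrt (<) w" "n - 1 \<in> set w" "cvar P w > 1 - d / 2"
          using W[of "d / 2" "n - 1"] d0 unfolding P_def by auto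
        obtain wl wr where wsplit: "w = wl @ (n - 1) # wr" using split_list[OF w(2)] by blast
        have swl: "sorted_wrt (<) wl" "\<forall>z\<in>set wl. z < n - 1" "sorted_wrt (<) ((n - 1) # wr)"
          using w(1) wsplit by (auto simp: sorted_wrt_append)
        have left: "cvar P (wl @ [n - 1]) \<le> F (n - 1)"
        proof -
          have "sorted_wrt (<) (wl @ [n - 1])" using swl by (auto simp: sorted_wrt_append)
          moreover have "n - 1 < n" using pn by simp
          ultimately show ?thesis using less(1)[of "n - 1" "wl @ [n - 1]"] unfolding P_def F_def by simp
        qed
        have cw: "cvar P w = cvar P (wl @ [n - 1]) + cvar P ((n - 1) # wr)"
          using wsplit cvar_split[of P wl "n - 1" wr] by simp
        have cc1: "cvar P c \<le> 1" using B less(2) unfolding P_def by simp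
        show False
        proof (cases wr)
          case Nil
          then have "cvar P w \<le> F (n - 1)" using cw left by simp
          moreover have "F (n - 1) \<le> F n" using Fn by simp
          ultimately show False using w(3) d_def cc1 d0 by linarith
        next
          case (Cons q wr')
          have qgt: "q > n - 1" "sorted_wrt (<) (q # wr')" using swl(3) Cons by auto
          show False
          proof (cases "q = n")
            case True
            have s: "sorted_wrt (<) (c' @ n # wr')"
              using strict_app3[OF sc'(1) sc'(2)] qgt True by simp
            have "cvar P (c' @ n # wr') = cvar P c + cvar P (n # wr')"
              using cvar_split[of P c' n wr'] c by simp
            then have "cvar P c + cvar P (n # wr') \<le> 1" using B[OF s] unfolding P_def by simp
            moreover have "cvar P w \<le> F n + cvar P (n # wr')"
              using cw left Fn Cons True by simp
            ultimately show False using w(3) d_def d0 by linarith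
          next
            case False
            then have qn: "q > n" using qgt by simp
            define a where "a = P p"
            define b where "b = P (n - 1)"
            define cc where "cc = P n"
            define dd where "dd = P q"
            define lam where "lam = cvar P c'"
            define rho where "rho = cvar P (q # wr')"
            have cvc': "cvar P c = lam + (cc - a)\<^sup>2" using cvc lam_def cc_def a_def by simp
            have cvw: "cvar P w \<le> F (n - 1) + (dd - b)\<^sup>2 + rho"
              using cw left Cons unfolding rho_def dd_def b_def by simp
            have k: "cvar P (c' @ [m]) = lam + (P m - a)\<^sup>2" for m
              using \<open>c' \<noteq> []\<close> p_def lam_def a_def by (simp add: cvar_snoc)
            have K1: "lam + (dd - a)\<^sup>2 + rho \<le> 1"
            proof -
              have "sorted_wrt (<) (c' @ q # wr')"
                using strict_app3[OF sc'(1)] sc'(2) qgt qn by (meson less_trans)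
              then have "cvar P (c' @ q # wr') \<le> 1" using B unfolding P_def by simp
              then show ?thesis using cvar_split[of P c' q wr'] k[of q] rho_def dd_def by simp
            qed
            have K2: "lam + (cc - a)\<^sup>2 + (dd - cc)\<^sup>2 + rho \<le> 1"
            proof -
              have "sorted_wrt (<) (n # q # wr')" using qgt qn by (auto intro: less_trans)
              then have "sorted_wrt (<) (c' @ n # q # wr')"
                using strict_app3[OF sc'(1) sc'(2)] by simp
              then have "cvar P (c' @ n # q # wr') \<le> 1" using B unfolding P_def by simp
              then show ?thesis using cvar_split[of P c' n "q # wr'"] k[of n] rho_def dd_def cc_def by simp
            qed
            have K3: "lam + (b - a)\<^sup>2 + (dd - b)\<^sup>2 + rho \<le> 1"
            proof -
              have "sorted_wrt (<) ((n - 1) # q # wr')" using qgt by (auto intro: less_trans)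
              moreover have "\<forall>z\<in>set c'. z < n - 1" using cmax pn1 by (meson le_less_trans)
              ultimately have "sorted_wrt (<) (c' @ (n - 1) # q # wr')"
                using strict_app3[OF sc'(1)] by simp
              then have "cvar P (c' @ (n - 1) # q # wr') \<le> 1" using B unfolding P_def by simp
              then show ?thesis using cvar_split[of P c' "n - 1" "q # wr'"] k[of "n - 1"] rho_def dd_def b_def by simp
            qed
            have "lam + rho + (cc - a)\<^sup>2 + (dd - b)\<^sup>2 - (cc - b)\<^sup>2 > 1 + d / 2"
              using cvc' cvw w(3) d_def Fn unfolding b_def cc_def by linarith
            then show False
              using core_arith[of "d / 2" "lam + rho" dd a 1 cc b] d0 K1 K2 K3 by (simp add: algebra_simps)
          qed
        qed
      qed
    qed
  qed
qed



lemma psum_bound: "x \<in> Jspace \<Longrightarrow> \<bar>psum x j\<bar> \<le> Jnorm x"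
proof -
  assume x: "x \<in> Jspace"
  have "sorted [0, j]" by simp
  from chain_le_Jnorm[OF x this] have "(psum x j)\<^sup>2 \<le> (Jnorm x)\<^sup>2" by simp
  then show ?thesis using Jnorm_nonneg[of x] by (metis abs_le_square_iff abs_of_nonneg)
qed

lemma chain_sup:
  assumes x: "x \<in> Jspace" and e: "e > 0"
  shows "\<exists>c. sorted c \<and> cvar (psum x) c > (Jnorm x)\<^sup>2 - e"
proof (rule ccontr)
  assume "\<not> ?thesis"
  then have all: "\<And>c. sorted c \<Longrightarrow> cvar (psum x) c \<le> (Jnorm x)\<^sup>2 - e" by force
  have M: "0 \<le> (Jnorm x)\<^sup>2 - e" using all[of "[]"] by simp
  have "Jnorm x \<le> sqrt ((Jnorm x)\<^sup>2 - e)"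
    using Jnorm_le_chain(2)[OF psum_convergent[OF x] all M] .
  then have "(Jnorm x)\<^sup>2 \<le> (Jnorm x)\<^sup>2 - e"
    using Jnorm_nonneg[of x] M by (metis power_mono real_sqrt_pow2)
  then show False using e by simp
qed

lemma W0:
  assumes x: "x \<in> Jspace" "Jnorm x = 1" and e: "e > 0"
  shows "\<exists>w. sorted_wrt (<) w \<and> 0 \<in> set w \<and> cvar (psum x) w > 1 - e"
proof -
  obtain c where c: "sorted c" "cvar (psum x) c > 1 - e" using chain_sup[OF x(1) e] x(2) by auto
  have s: "sorted (0 # c)" using c(1) by simp
  show ?thesis
    using sorted_remdups_adj_strict[OF s] cvar_remdups_adj[of "psum x" "0 # c"] cvar_Cons_ge[of "psum x" c 0] c(2)
    by (intro exI[of _ "remdups_adj (0 # c)"]) auto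
qed

definition pert :: "(nat \<Rightarrow> real) \<Rightarrow> nat \<Rightarrow> real \<Rightarrow> nat \<Rightarrow> real" where
  "pert x n s = (\<lambda>k. x k + s * ((if k = n - 1 then 1 else 0) - (if k = n then 1 else 0)))"

lemma sum_delta_s: fixes j a :: nat shows "(\<Sum>k<j. s * (if k = a then 1 else 0)) = (if a < j then s else (0::real))"
proof -
  have "(\<Sum>k<j. s * (if k = a then 1 else 0)) = s * (\<Sum>k<j. (if k = a then 1 else 0))"
    by (rule sum_distrib_left[symmetric])
  also have "(\<Sum>k<j. (if k = a then 1 else 0)) = (if a < j then 1 else (0::real))"
    by (subst sum.delta) auto
  finally show ?thesis by simp
qed

lemma psum_pert: "n \<ge> 1 \<Longrightarrow> psum (pert x n s) j = psum x j + (if j = n then s else 0)"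
proof -
  assume n: "n \<ge> 1"
  have "psum (pert x n s) j = psum x j + (\<Sum>k<j. s * (if k = n - 1 then 1 else 0)) - (\<Sum>k<j. s * (if k = n then 1 else 0))"
    unfolding pert_def psum_def by (simp add: sum.distrib sum_subtractf right_diff_distrib)
  also have "\<dots> = psum x j + (if n - 1 < j then s else 0) - (if n < j then s else 0)"
    by (simp only: sum_delta_s)
  also have "\<dots> = psum x j + (if j = n then s else 0)"
    using n by auto
  finally show ?thesis .
qed

lemma sq_pert: fixes u s :: real shows "\<bar>u\<bar> \<le> 2 \<Longrightarrow> \<bar>s\<bar> \<le> 1 \<Longrightarrow> (u + s)\<^sup>2 \<le> u\<^sup>2 + 5 * \<bar>s\<bar>"
proof -
  assume a: "\<bar>u\<bar> \<le> 2" "\<bar>s\<bar> \<le> 1"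
  have "2 * u * s \<le> 4 * \<bar>s\<bar>"
  proof -
    have "u * s \<le> \<bar>u\<bar> * \<bar>s\<bar>" by (metis abs_ge_self abs_mult)
    then have "2 * u * s \<le> 2 * \<bar>u\<bar> * \<bar>s\<bar>" by simp
    also have "\<dots> \<le> 4 * \<bar>s\<bar>" using a by (simp add: mult_right_mono)
    finally show ?thesis .
  qed
  moreover have "s\<^sup>2 \<le> \<bar>s\<bar>"
  proof -
    have "s\<^sup>2 = \<bar>s\<bar> * \<bar>s\<bar>" by (simp add: power2_eq_square)
    also have "\<dots> \<le> 1 * \<bar>s\<bar>" using a(2) by (intro mult_right_mono) auto
    finally show ?thesis by simp
  qed
  ultimately show ?thesis by (simp add: power2_eq_square algebra_simps)
qed

lemma pert_bound:
  assumes s: "sorted_wrt (<) (l @ n # r)" and P: "\<And>j. \<bar>P j\<bar> \<le> 1"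
    and P': "\<And>j. j \<noteq> n \<Longrightarrow> P' j = P j" "P' n = P n + s" and sb: "\<bar>s\<bar> \<le> 1"
  shows "cvar P' (l @ n # r) \<le> cvar P (l @ n # r) + 10 * \<bar>s\<bar>"
proof -
  have nl: "n \<notin> set l" and nr: "n \<notin> set r" using s by (auto simp: sorted_wrt_append)
  have L: "cvar P' (l @ [n]) \<le> cvar P (l @ [n]) + 5 * \<bar>s\<bar>"
  proof (cases "l = []")
    case False
    have cl: "cvar P' l = cvar P l" using nl by (intro cvar_cong P'(1)) auto
    have ll: "P' (last l) = P (last l)" using nl False P'(1) by (metis last_in_set)
    have "\<bar>P n - P (last l)\<bar> \<le> 2" using P[of n] P[of "last l"] by linarith
    from sq_pert[OF this sb] have "(P n - P (last l) + s)\<^sup>2 \<le> (P n - P (last l))\<^sup>2 + 5 * \<bar>s\<bar>" .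
    then show ?thesis using False cl ll P'(2) by (simp add: cvar_snoc algebra_simps)
  qed simp
  have R: "cvar P' (n # r) \<le> cvar P (n # r) + 5 * \<bar>s\<bar>"
  proof (cases r)
    case (Cons h t)
    have cr: "cvar P' r = cvar P r" using nr by (intro cvar_cong P'(1)) auto
    have hh: "P' h = P h" using nr Cons P'(1) by auto
    have "\<bar>P h - P n\<bar> \<le> 2" using P[of n] P[of h] by linarith
    from sq_pert[OF this, of "- s"] sb have "(P h - P n + - s)\<^sup>2 \<le> (P h - P n)\<^sup>2 + 5 * \<bar>s\<bar>" by simp
    then show ?thesis using Cons cr hh P'(2) by (simp add: algebra_simps)
  qed simp
  show ?thesis using L R cvar_split[of P' l n r] cvar_split[of P l n r] by simp
qed



lemma Wn:
  assumes x: "x \<in> Jspace" "Jnorm x = 1" and ext: "seq_extreme_point x J_ball"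
    and n: "n \<ge> 1" and e: "e > 0"
  shows "\<exists>w. sorted_wrt (<) w \<and> n \<in> set w \<and> cvar (psum x) w > 1 - e"
proof (rule ccontr)
  assume "\<not> ?thesis"
  then have H: "\<And>w. sorted_wrt (<) w \<Longrightarrow> n \<in> set w \<Longrightarrow> cvar (psum x) w \<le> 1 - e" by force
  have e1: "e \<le> 1" using H[of "[n]"] by simp
  define t where "t = e / 10"
  have t: "t > 0" "t \<le> 1" using e e1 by (auto simp: t_def)
  have Pb: "\<bar>psum x j\<bar> \<le> 1" for j using psum_bound[OF x(1)] x(2) by simp
  have ball: "pert x n s \<in> J_ball" if s: "\<bar>s\<bar> \<le> t" for s
  proof -
    let ?y = "pert x n s"
    have py: "psum ?y = (\<lambda>j. psum x j + (if j = n then s else 0))"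
      using psum_pert[OF n] by auto
    have "convergent (\<lambda>j. if j = n then s else (0::real))"
    proof -
      have "eventually (\<lambda>j. (if j = n then s else (0::real)) = 0) sequentially"
        using eventually_gt_at_top[of n] by eventually_elim simp
      then show ?thesis by (auto simp: convergent_def intro!: exI[of _ 0] tendsto_eventually)
    qed
    then have conv: "convergent (psum ?y)"
      unfolding py using psum_convergent[OF x(1)] by (intro convergent_add)
    have bd: "cvar (psum ?y) c \<le> 1" if c: "sorted c" for c
    proof -
      let ?c = "remdups_adj c"
      have sc: "sorted_wrt (<) ?c" using sorted_remdups_adj_strict[OF c] .
      have "cvar (psum ?y) ?c \<le> 1"
      proof (cases "n \<in> set ?c")
        case True
        then obtain l r where lr: "?c = l @ n # r" by (meson split_list)
        have "cvar (psum ?y) (l @ n # r) \<le> cvar (psum x) (l @ n # r) + 10 * \<bar>s\<bar>"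
          using sc lr Pb s t by (intro pert_bound) (auto simp: py)
        moreover have "cvar (psum x) (l @ n # r) \<le> 1 - e" using H sc lr by (metis in_set_conv_decomp)
        moreover have "10 * \<bar>s\<bar> \<le> e" using s t_def by simp
        ultimately show ?thesis using lr by simp
      next
        case False
        have "cvar (psum ?y) ?c = cvar (psum x) ?c" using False by (intro cvar_cong) (auto simp: py)
        also have "\<dots> \<le> 1" using chain_le_Jnorm[OF x(1) strict_sorted_imp_sorted[OF sc]] x(2) by simp
        finally show ?thesis .
      qed
      then show ?thesis by (simp add: cvar_remdups_adj)
    qed
    have "?y \<in> Jspace" "Jnorm ?y \<le> sqrt 1" using Jnorm_le_chain[OF conv bd] by auto
    then show ?thesis unfolding J_ball_def by simp
  qed
  have a: "pert x n (- t) \<in> J_ball" and b: "pert x n t \<in> J_ball" using ball t by auto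
  have neq: "pert x n (- t) \<noteq> pert x n t"
  proof
    assume "pert x n (- t) = pert x n t"
    then have "pert x n (- t) n = pert x n t n" by simp
    moreover have "n \<noteq> n - 1" using n by simp
    ultimately show False using t unfolding pert_def by (simp split: if_splits)
  qed
  have mid: "x = (\<lambda>k. (1 - 1/2) * pert x n (- t) k + 1/2 * pert x n t k)"
    unfolding pert_def by (auto simp: algebra_simps)
  show False using ext a b neq mid unfolding seq_extreme_point_def
    by (metis (no_types) field_sum_of_halves half_gt_zero_iff less_numeral_extra(1) zero_less_one
        add_diff_cancel_left' diff_less less_add_same_cancel1)
qed

lemma star:
  assumes x: "x \<in> Jspace" "Jnorm x = 1" and ext: "seq_extreme_point x J_ball"
    and c: "sorted_wrt (<) c" "c \<noteq> []"
  shows "cvar (psum x) c \<le> (\<Sum>k\<in>{hd c..<last c}. (x k)\<^sup>2)"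
proof -
  have W: "\<exists>w. sorted_wrt (<) w \<and> m \<in> set w \<and> cvar (psum x) w > 1 - e" if "e > 0" for m e
  proof (cases "m = 0")
    case True then show ?thesis using W0[OF x that] by simp
  next
    case False then show ?thesis using Wn[OF x ext _ that, of m] by simp
  qed
  have B: "cvar (psum x) c \<le> 1" if "sorted_wrt (<) c" for c
    using chain_le_Jnorm[OF x(1) strict_sorted_imp_sorted[OF that]] x(2) by simp
  define lo where "lo = hd c"
  define ct where "ct = tl c"
  have cc: "c = lo # ct" using c(2) unfolding lo_def ct_def by simp
  have s0: "sorted_wrt (<) ([0..<lo] @ lo # ct)" using c(1) cc by (intro strict_app3) auto
  have "cvar (psum x) ([0..<lo] @ lo # ct) = cvar (psum x) ([0..<lo] @ [lo]) + cvar (psum x) c"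
    using cvar_split cc by metis
  also have "[0..<lo] @ [lo] = [0..<Suc lo]" by simp
  finally have e1: "cvar (psum x) ([0..<lo] @ lo # ct) = (\<Sum>k<lo. (x k)\<^sup>2) + cvar (psum x) c"
    using cvar_upt by simp
  have "cvar (psum x) ([0..<lo] @ lo # ct) \<le> (\<Sum>k<last c. (x k)\<^sup>2)"
    using core[OF W B s0] cc by (metis Nil_is_append_conv last_appendR list.distinct(1))
  moreover have "lo \<le> last c" using c cc sorted_wrt_last_max[OF c(1), of lo] by simp
  moreover have "(\<Sum>k<last c. (x k)\<^sup>2) - (\<Sum>k<lo. (x k)\<^sup>2) = (\<Sum>k\<in>{lo..<last c}. (x k)\<^sup>2)"
    using sum_diff_nat_ivl[of 0 lo "last c" "\<lambda>k. (x k)\<^sup>2"] \<open>lo \<le> last c\<close> by (simp add: atLeast0LessThan)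
  ultimately have "cvar (psum x) c \<le> (\<Sum>k\<in>{lo..<last c}. (x k)\<^sup>2)" using e1 by linarith
  then show ?thesis by (simp add: lo_def)
qed

lemma l2_le_J:
  assumes z: "z \<in> Jspace"
  shows "summable (\<lambda>k. (z k)\<^sup>2)" "l2norm z \<le> Jnorm z"
proof -
  have b: "(\<Sum>k<N. (z k)\<^sup>2) \<le> (Jnorm z)\<^sup>2" for N
  proof -
    have "cvar (psum z) [0..<Suc N] \<le> (Jnorm z)\<^sup>2" by (rule chain_le_Jnorm[OF z]) (rule sorted_upt)
    then show ?thesis by (simp only: cvar_upt)
  qed
  show sm: "summable (\<lambda>k. (z k)\<^sup>2)" by (rule summableI_nonneg_bounded[OF _ b]) simp
  have "suminf (\<lambda>k. (z k)\<^sup>2) \<le> (Jnorm z)\<^sup>2" by (rule suminf_le_const[OF sm b])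
  then show "l2norm z \<le> Jnorm z" unfolding l2norm_def using Jnorm_nonneg[of z]
    by (metis real_sqrt_abs real_sqrt_le_mono abs_of_nonneg)
qed

lemma restrict_chain:
  assumes pz: "\<And>j. psum z j = psum x (g j) - psum x lo" and gm: "mono g" and glo: "\<And>j. lo \<le> g j"
    and gI: "\<And>j k. k \<in> {lo..<g j} \<Longrightarrow> z k = x k"
    and star: "\<And>c. sorted_wrt (<) c \<Longrightarrow> c \<noteq> [] \<Longrightarrow> cvar (psum x) c \<le> (\<Sum>k\<in>{hd c..<last c}. (x k)\<^sup>2)"
    and sz: "summable (\<lambda>k. (z k)\<^sup>2)" and c: "sorted c"
  shows "cvar (psum z) c \<le> suminf (\<lambda>k. (z k)\<^sup>2)"
proof -
  have "psum z = (\<lambda>j. (psum x \<circ> g) j + (- psum x lo))" using pz by auto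
  then have "cvar (psum z) c = cvar (psum x \<circ> g) c" using cvar_shift by metis
  also have "\<dots> = cvar (psum x) (map g c)" by (simp add: cvar_map)
  also have "\<dots> \<le> cvar (psum x) (lo # map g c)" by (rule cvar_Cons_ge)
  also have "\<dots> = cvar (psum x) (remdups_adj (lo # map g c))" by (simp add: cvar_remdups_adj)
  also have "\<dots> \<le> (\<Sum>k\<in>{lo..<last (lo # map g c)}. (x k)\<^sup>2)"
  proof -
    have "sorted (map g c)" using c gm by (intro sorted_map_mono) (auto simp: mono_on_def mono_def)
    then have "sorted (lo # map g c)" using glo by simp
    from star[OF sorted_remdups_adj_strict[OF this]]
    have "cvar (psum x) (remdups_adj (lo # map g c))
      \<le> (\<Sum>k\<in>{hd (remdups_adj (lo # map g c))..<last (remdups_adj (lo # map g c))}. (x k)\<^sup>2)" by simp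
    then show ?thesis by (simp only: hd_remdups_adj last_remdups_adj list.sel(1))
  qed
  also have "\<dots> \<le> suminf (\<lambda>k. (z k)\<^sup>2)"
  proof (cases "c = []")
    case True then show ?thesis using sz by (simp add: suminf_nonneg)
  next
    case False
    then have "last (lo # map g c) = g (last c)" by (simp add: last_map)
    moreover have "(\<Sum>k\<in>{lo..<g (last c)}. (x k)\<^sup>2) = (\<Sum>k\<in>{lo..<g (last c)}. (z k)\<^sup>2)"
      using gI[of _ "last c"] by (intro sum.cong) auto
    ultimately have "(\<Sum>k\<in>{lo..<last (lo # map g c)}. (x k)\<^sup>2) = (\<Sum>k\<in>{lo..<g (last c)}. (z k)\<^sup>2)"
      by simp
    also have "\<dots> \<le> suminf (\<lambda>k. (z k)\<^sup>2)" using sz by (intro sum_le_suminf) auto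
    finally show ?thesis .
  qed
  finally show ?thesis .
qed

lemma part1:
  assumes x: "x \<in> Jspace" "Jnorm x = 1" and ext: "seq_extreme_point x J_ball"
    and I: "is_interval_nat I"
  shows "Jnorm (restrict_seq x I) = l2norm (restrict_seq x I)"
proof -
  define z where "z = restrict_seq x I"
  have zk: "z k = (if k \<in> I then x k else 0)" for k unfolding z_def restrict_seq_def by simp
  have sx: "summable (\<lambda>k. (x k)\<^sup>2)" using l2_le_J(1)[OF x(1)] .
  have sz: "summable (\<lambda>k. (z k)\<^sup>2)"
    by (rule summable_comparison_test[OF _ sx]) (auto simp: zk)
  have pzI: "psum z j = sum x ({..<j} \<inter> I)" for j
    unfolding psum_def zk by (simp add: sum.inter_restrict)
  have key: "\<exists>g lo. (\<forall>j. psum z j = psum x (g j) - psum x lo) \<and> mono g \<and> (\<forall>j. lo \<le> g j)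
     \<and> (\<forall>j k. k \<in> {lo..<g j} \<longrightarrow> z k = x k) \<and> convergent (psum z)"
  proof (cases "finite I")
    case True
    define lo where "lo = Min I"
    define hi where "hi = Max I"
    have Ieq: "I = {lo..hi}" using interval_finite[OF I True] lo_def hi_def by simp
    define g where "g = (\<lambda>j. min (max j lo) (Suc hi))"
    have lohi: "lo \<le> hi" using I Ieq unfolding is_interval_nat_def by auto
    have glo: "\<forall>j. lo \<le> g j" unfolding g_def using lohi by auto
    have ps: "\<forall>j. psum z j = psum x (g j) - psum x lo"
    proof
      fix j
      have "{..<j} \<inter> I = {lo..<g j}" unfolding Ieq g_def by auto
      then show "psum z j = psum x (g j) - psum x lo" using pzI psum_ivl glo by simp
    qed
    have "eventually (\<lambda>j. psum z j = psum x (Suc hi) - psum x lo) sequentially"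
      using eventually_ge_at_top[of "Suc hi"] by eventually_elim (use ps lohi in \<open>auto simp: g_def\<close>)
    then have "convergent (psum z)" unfolding convergent_def by (blast intro: tendsto_eventually)
    moreover have "mono g" unfolding g_def mono_def by auto
    moreover have "\<forall>j k. k \<in> {lo..<g j} \<longrightarrow> z k = x k" unfolding zk Ieq g_def by auto
    ultimately show ?thesis using ps glo by blast
  next
    case False
    define lo where "lo = (LEAST z. z \<in> I)"
    have Ieq: "I = {lo..}" using interval_infinite[OF I False] lo_def by simp
    define g where "g = (\<lambda>j. max j lo)"
    have glo: "\<forall>j. lo \<le> g j" unfolding g_def by auto
    have ps: "\<forall>j. psum z j = psum x (g j) - psum x lo"
    proof
      fix j
      have "{..<j} \<inter> I = {lo..<g j}" unfolding Ieq g_def by auto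
      then show "psum z j = psum x (g j) - psum x lo" using pzI psum_ivl glo by simp
    qed
    obtain L where L: "psum x \<longlonglongrightarrow> L" using psum_convergent[OF x(1)] by (auto simp: convergent_def)
    have "(\<lambda>j. psum x j - psum x lo) \<longlonglongrightarrow> L - psum x lo" by (intro tendsto_intros L)
    moreover have "eventually (\<lambda>j. psum x j - psum x lo = psum z j) sequentially"
      using eventually_ge_at_top[of lo] by eventually_elim (use ps in \<open>auto simp: g_def\<close>)
    ultimately have "psum z \<longlonglongrightarrow> L - psum x lo" by (rule Lim_transform_eventually)
    then have "convergent (psum z)" unfolding convergent_def by blast
    moreover have "mono g" unfolding g_def mono_def by auto
    moreover have "\<forall>j k. k \<in> {lo..<g j} \<longrightarrow> z k = x k" unfolding zk Ieq g_def by auto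
    ultimately show ?thesis using ps glo by blast
  qed
  then obtain g lo where g: "\<forall>j. psum z j = psum x (g j) - psum x lo" "mono g" "\<forall>j. lo \<le> g j"
    "\<forall>j k. k \<in> {lo..<g j} \<longrightarrow> z k = x k" "convergent (psum z)" by blast
  have bd: "cvar (psum z) c \<le> suminf (\<lambda>k. (z k)\<^sup>2)" if "sorted c" for c
    using restrict_chain[of z x g lo c] g star[OF x ext] sz that by blast
  have M: "0 \<le> suminf (\<lambda>k. (z k)\<^sup>2)" using sz by (simp add: suminf_nonneg)
  have "z \<in> Jspace" "Jnorm z \<le> l2norm z"
    using Jnorm_le_chain[OF g(5) bd M] unfolding l2norm_def by auto
  moreover have "l2norm z \<le> Jnorm z" using l2_le_J(2) calculation(1) .
  ultimately show ?thesis unfolding z_def by simp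
qed



locale nfam =
  fixes x :: "nat \<Rightarrow> real" and F :: "nat set" and II :: "nat \<Rightarrow> nat set" and k :: "nat \<Rightarrow> nat"
  assumes xJ: "x \<in> Jspace" and xn: "Jnorm x = 1" and nf: "norming_family x F II"
    and km: "strict_mono_on F k"
begin

definition b where "b i = interval_sum x (II i)"
definition lo where "lo i = (LEAST z. z \<in> II i)"
definition hi where "hi i = Max (II i)"
definition L where "L = lim (psum x)"

lemma Fshape: "F = UNIV \<or> (\<exists>m\<ge>1. F = {..<m})"
  using nf unfolding norming_family_def interval_family_def by blast

lemma Fiv: "i \<in> F \<Longrightarrow> is_interval_nat (II i)"
  using nf unfolding norming_family_def interval_family_def by blast

lemma Fsuc: "i \<in> F \<Longrightarrow> Suc i \<in> F \<Longrightarrow> a \<in> II i \<Longrightarrow> c \<in> II (Suc i) \<Longrightarrow> a < c"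
  using nf unfolding norming_family_def interval_family_def by blast

lemma Fdown: "i \<in> F \<Longrightarrow> j \<le> i \<Longrightarrow> j \<in> F"
  using Fshape by auto

lemma F0: "0 \<in> F"
  using Fshape by auto

lemma Fne: "i \<in> F \<Longrightarrow> II i \<noteq> {}"
  using Fiv unfolding is_interval_nat_def by blast

lemma ORD: "i < j \<Longrightarrow> j \<in> F \<Longrightarrow> a \<in> II i \<Longrightarrow> c \<in> II j \<Longrightarrow> a < c"
proof (induction j arbitrary: c)
  case 0 then show ?case by simp
next
  case (Suc j)
  have jF: "j \<in> F" using Suc(3) Fdown by simp
  show ?case
  proof (cases "i = j")
    case True
    then show ?thesis using Fsuc[OF jF Suc(3)] Suc by simp
  next
    case False
    then have "i < j" using Suc(2) by simp
    obtain w where w: "w \<in> II j" using Fne[OF jF] by blast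
    have "a < w" using Suc(1)[OF \<open>i < j\<close> jF Suc(4) w] .
    also have "w < c" using Fsuc[OF jF Suc(3) w Suc(5)] .
    finally show ?thesis .
  qed
qed

lemma lo_in: "i \<in> F \<Longrightarrow> lo i \<in> II i"
  unfolding lo_def using Fne by (metis LeastI ex_in_conv)

lemma lo_le: "z \<in> II i \<Longrightarrow> lo i \<le> z"
  unfolding lo_def by (rule Least_le)

lemma lo_mono: "i < j \<Longrightarrow> j \<in> F \<Longrightarrow> lo i < lo j"
  using ORD lo_in Fdown by (meson less_imp_le)

lemma inj_II: "inj_on II F"
proof (rule inj_onI)
  fix i j assume ij: "i \<in> F" "j \<in> F" "II i = II j"
  show "i = j"
  proof (rule ccontr)
    assume "i \<noteq> j"
    then consider "i < j" | "j < i" by linarith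
    then show False
    proof cases
      case 1 then show False using ORD[OF 1 ij(2) lo_in[OF ij(1)], of "lo i"] lo_in[OF ij(1)] ij(3) by simp
    next
      case 2 then show False using ORD[OF 2 ij(1) lo_in[OF ij(2)], of "lo j"] lo_in[OF ij(2)] ij(3) by simp
    qed
  qed
qed

lemma fin_if_suc: "i \<in> F \<Longrightarrow> Suc i \<in> F \<Longrightarrow> finite (II i)"
proof -
  assume a: "i \<in> F" "Suc i \<in> F"
  have "II i \<subseteq> {..<lo (Suc i)}" using Fsuc[OF a] lo_in[OF a(2)] by auto
  then show ?thesis by (rule finite_subset) simp
qed

lemma fin_eq: "i \<in> F \<Longrightarrow> finite (II i) \<Longrightarrow> II i = {lo i..hi i} \<and> lo i \<le> hi i"
proof -
  assume a: "i \<in> F" "finite (II i)"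
  have h: "hi i \<in> II i" unfolding hi_def using a Fne by simp
  have "II i \<subseteq> {lo i..hi i}" using a lo_le unfolding hi_def by auto
  moreover have "{lo i..hi i} \<subseteq> II i"
  proof
    fix z assume "z \<in> {lo i..hi i}"
    then show "z \<in> II i" by (intro interval_mem[OF Fiv[OF a(1)] lo_in[OF a(1)] h]) auto
  qed
  ultimately show ?thesis using lo_le[OF h] by auto
qed

lemma L_lim: "psum x \<longlonglongrightarrow> L"
  using psum_convergent[OF xJ] unfolding L_def by (simp add: convergent_LIMSEQ_iff)

lemma b_fin: "i \<in> F \<Longrightarrow> finite (II i) \<Longrightarrow> b i = psum x (Suc (hi i)) - psum x (lo i)"
proof -
  assume a: "i \<in> F" "finite (II i)"
  have e: "II i = {lo i..hi i}" "lo i \<le> hi i" using fin_eq[OF a] by blast+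
  have "{lo i..hi i} = {lo i..<Suc (hi i)}" by (simp add: atLeastLessThanSuc_atLeastAtMost)
  then have "b i = interval_sum x {lo i..<Suc (hi i)}" unfolding b_def using e(1) by simp
  also have "\<dots> = psum x (Suc (hi i)) - psum x (lo i)" using e(2) by (intro isum_ivl) simp
  finally show ?thesis .
qed

lemma b_inf: "i \<in> F \<Longrightarrow> infinite (II i) \<Longrightarrow> b i = L - psum x (lo i)"
proof -
  assume a: "i \<in> F" "infinite (II i)"
  have "II i = {lo i..}" using interval_infinite[OF Fiv[OF a(1)] a(2)] lo_def by simp
  then show ?thesis unfolding b_def using isum_atLeast[OF L_lim] by simp
qed

lemma infsum1: "infsum (\<lambda>i. (b i)\<^sup>2) F = 1" and summ: "(\<lambda>i. (b i)\<^sup>2) summable_on F"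
proof -
  have bb: "(\<lambda>i. (b i)\<^sup>2) = (\<lambda>i. (interval_sum x (II i))\<^sup>2)" by (rule ext) (simp only: b_def)
  have "sqrt (infsum (\<lambda>i. (interval_sum x (II i))\<^sup>2) F) = Jnorm x"
    using nf unfolding norming_family_def by (elim conjE)
  then have "sqrt (infsum (\<lambda>i. (b i)\<^sup>2) F) = 1" using xn bb by simp
  then show i1: "infsum (\<lambda>i. (b i)\<^sup>2) F = 1" by simp
  show "(\<lambda>i. (b i)\<^sup>2) summable_on F"
    using i1 infsum_not_exists by (metis zero_neq_one)
qed

lemma gap:
  assumes G: "is_interval_nat G" "\<And>i. i \<in> F \<Longrightarrow> G \<inter> II i = {}"
  shows "interval_sum x G = 0"
proof -
  define g where "g = interval_sum x G"
  have fs: "sum (\<lambda>i. (b i)\<^sup>2) F' \<le> 1 - g\<^sup>2" if F': "finite F'" "F' \<subseteq> F" for F'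
  proof -
    have IF: "II ` F' \<in> Fam"
    proof -
      have "disjoint (II ` F')"
      proof (rule pairwiseI)
        fix A B assume AB: "A \<in> II ` F'" "B \<in> II ` F'" "A \<noteq> B"
        then obtain i j where ij: "i \<in> F'" "j \<in> F'" "A = II i" "B = II j" by blast
        then have "i \<noteq> j" using AB by blast
        have iF: "i \<in> F" "j \<in> F" using ij F' by auto
        consider "i < j" | "j < i" using \<open>i \<noteq> j\<close> by linarith
        then show "disjnt A B"
        proof cases
          case 1 then show ?thesis using ORD[OF 1 iF(2)] unfolding ij disjnt_def disjoint_iff by (meson less_irrefl)
        next
          case 2 then show ?thesis using ORD[OF 2 iF(1)] unfolding ij disjnt_def disjoint_iff by (meson less_irrefl)
        qed
      qed
      then show ?thesis unfolding Fam_def using F' Fiv by auto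
    qed
    have GI: "insert G (II ` F') \<in> Fam"
      using IF G F' by (intro Fam_insert) auto
    have Gnin: "G \<notin> II ` F'"
    proof
      assume "G \<in> II ` F'"
      then obtain i where "i \<in> F'" "G = II i" by blast
      then show False using G(2)[of i] F' G(1) unfolding is_interval_nat_def by auto
    qed
    have inj: "inj_on II F'" using inj_II F' inj_on_subset by blast
    have "Qf x (insert G (II ` F')) = g\<^sup>2 + sum (\<lambda>i. (b i)\<^sup>2) F'"
      unfolding Qf_def g_def b_def using Gnin F' by (simp add: sum.reindex[OF inj])
    moreover have "Qf x (insert G (II ` F')) \<le> 1" using Qf_le[OF xJ GI] xn by simp
    ultimately show ?thesis by simp
  qed
  have "infsum (\<lambda>i. (b i)\<^sup>2) F \<le> 1 - g\<^sup>2" by (rule infsum_le_finite_sums[OF summ fs])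
  then have "g\<^sup>2 \<le> 0" using infsum1 by simp
  then show ?thesis unfolding g_def by simp
qed

lemma N1: "psum x (lo 0) = 0"
proof (cases "lo 0 = 0")
  case False
  let ?G = "{0..<lo 0}"
  have "?G \<inter> II i = {}" if i: "i \<in> F" for i
  proof (rule equals0I)
    fix z assume z: "z \<in> ?G \<inter> II i"
    show False
    proof (cases "i = 0")
      case True then show False using z lo_le[of z 0] by auto
    next
      case False then show False using z ORD[of 0 i "lo 0" z] i lo_in[OF F0] by auto
    qed
  qed
  then have "interval_sum x ?G = 0" using False by (intro gap is_interval_atLeastLessThan) auto
  then show ?thesis by (simp add: isum_ivl)
qed simp

lemma N2: "i \<in> F \<Longrightarrow> Suc i \<in> F \<Longrightarrow> psum x (Suc (hi i)) = psum x (lo (Suc i))"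
proof -
  assume i: "i \<in> F" "Suc i \<in> F"
  have fin: "finite (II i)" using fin_if_suc[OF i] .
  have hin: "hi i \<in> II i" unfolding hi_def using fin Fne[OF i(1)] by simp
  have hlt: "hi i < lo (Suc i)" using Fsuc[OF i hin lo_in[OF i(2)]] .
  show ?thesis
  proof (cases "Suc (hi i) = lo (Suc i)")
    case False
    let ?G = "{Suc (hi i)..<lo (Suc i)}"
    have "?G \<inter> II j = {}" if j: "j \<in> F" for j
    proof (rule equals0I)
      fix z assume z: "z \<in> ?G \<inter> II j"
      consider "j < i" | "j = i" | "j = Suc i" | "Suc i < j" by linarith
      then show False
      proof cases
        case 1 then show False using ORD[OF 1 i(1), of z "hi i"] z hin by auto
      next
        case 2 then show False using z Max_ge[OF fin, of z] unfolding hi_def by auto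
      next
        case 3 then show False using z lo_le[of z "Suc i"] by auto
      next
        case 4 then show False using ORD[OF 4 j lo_in[OF i(2)], of z] z by auto
      qed
    qed
    then have "interval_sum x ?G = 0" using False hlt by (intro gap is_interval_atLeastLessThan) auto
    then show ?thesis using hlt by (simp add: isum_ivl)
  qed simp
qed

lemma N3: "F = {..<m} \<Longrightarrow> m \<ge> 1 \<Longrightarrow> finite (II (m - 1)) \<Longrightarrow> psum x (Suc (hi (m - 1))) = L"
proof -
  assume m: "F = {..<m}" "m \<ge> 1" "finite (II (m - 1))"
  have mF: "m - 1 \<in> F" using m by auto
  have hin: "hi (m - 1) \<in> II (m - 1)" unfolding hi_def using m(3) Fne[OF mF] by simp
  let ?G = "{Suc (hi (m - 1))..}"
  have "?G \<inter> II j = {}" if j: "j \<in> F" for j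
  proof (rule equals0I)
    fix z assume z: "z \<in> ?G \<inter> II j"
    have "j \<le> m - 1" using j m by auto
    then consider "j < m - 1" | "j = m - 1" by linarith
    then show False
    proof cases
      case 1 then show False using ORD[OF 1 mF, of z "hi (m - 1)"] z hin by auto
    next
      case 2 then show False using z Max_ge[OF m(3), of z] unfolding hi_def by auto
    qed
  qed
  then have "interval_sum x ?G = 0" by (intro gap is_interval_atLeast) auto
  then show ?thesis using isum_atLeast[OF L_lim] by simp
qed

definition T where "T c = (if c \<in> F then psum x (lo c) else L)"

lemma tele: "(c = 0 \<or> c - 1 \<in> F) \<Longrightarrow> sum b (F \<inter> {..<c}) = T c"
proof (induction c)
  case 0
  then show ?case using N1 F0 by (simp add: T_def)
next
  case (Suc c)
  have cF: "c \<in> F" using Suc(2) by simp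
  have IH: "sum b (F \<inter> {..<c}) = psum x (lo c)"
    using Suc(1) cF Fdown[OF cF, of "c - 1"] by (simp add: T_def)
  have "F \<inter> {..<Suc c} = insert c (F \<inter> {..<c})" using cF by auto
  then have S: "sum b (F \<inter> {..<Suc c}) = b c + psum x (lo c)" using IH by simp
  show ?case
  proof (cases "Suc c \<in> F")
    case True
    have "b c = psum x (lo (Suc c)) - psum x (lo c)"
      using b_fin[OF cF fin_if_suc[OF cF True]] N2[OF cF True] by simp
    then show ?thesis using S True by (simp add: T_def)
  next
    case False
    then obtain m where m: "m \<ge> 1" "F = {..<m}" using Fshape by auto
    then have mc: "m = Suc c" using cF False by auto
    have "b c = L - psum x (lo c)"
    proof (cases "finite (II c)")
      case True
      then show ?thesis using b_fin[OF cF True] N3[OF m(2) m(1)] mc by simp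
    next
      case False
      then show ?thesis using b_inf[OF cF] by simp
    qed
    then show ?thesis using S False by (simp add: T_def)
  qed
qed

end



lemma cvar_tendsto:
  "(\<And>z. z \<in> set d \<Longrightarrow> (\<lambda>N. P N z) \<longlonglongrightarrow> Q z) \<Longrightarrow> (\<lambda>N. cvar (P N) d) \<longlonglongrightarrow> cvar Q d"
proof (induction d rule: induct_list012)
  case (3 a b r)
  have "(\<lambda>N. (P N b - P N a)\<^sup>2 + cvar (P N) (b # r)) \<longlonglongrightarrow> (Q b - Q a)\<^sup>2 + cvar Q (b # r)"
    using 3 by (intro tendsto_intros) auto
  then show ?case by simp
qed auto

lemma downclosed_eq: "finite (S::nat set) \<Longrightarrow> (\<And>i i'. i \<in> S \<Longrightarrow> i' \<le> i \<Longrightarrow> i' \<in> S) \<Longrightarrow> S = {..<card S}"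
proof (cases "S = {}")
  case False
  assume f: "finite S" and d: "\<And>i i'. i \<in> S \<Longrightarrow> i' \<le> i \<Longrightarrow> i' \<in> S"
  have "S = {..Max S}"
  proof
    show "S \<subseteq> {..Max S}" using f by auto
    show "{..Max S} \<subseteq> S" using d Max_in[OF f False] by auto
  qed
  then show ?thesis by (metis card_atMost lessThan_Suc_atMost)
qed simp

context nfam
begin

definition y where "y = spread_seq F k b"
definition A where "A j = {i \<in> F. k i < j}"
definition cnt where "cnt j = card (A j)"

lemma k_ge: "i \<in> F \<Longrightarrow> i \<le> k i"
proof (induction i)
  case (Suc i)
  have "i \<in> F" using Suc(2) Fdown by simp
  then have "k i < k (Suc i)" using km Suc(2) by (simp add: strict_mono_onD)
  then show ?case using Suc(1)[OF \<open>i \<in> F\<close>] by simp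
qed simp

lemma A_fin: "finite (A j)"
proof -
  have "A j \<subseteq> {..<j}" unfolding A_def using k_ge by fastforce
  then show ?thesis by (rule finite_subset) simp
qed

lemma A_down: "i \<in> A j \<Longrightarrow> i' \<le> i \<Longrightarrow> i' \<in> A j"
proof -
  assume a: "i \<in> A j" "i' \<le> i"
  have iF: "i \<in> F" "k i < j" using a(1) unfolding A_def by auto
  have i'F: "i' \<in> F" using Fdown[OF iF(1) a(2)] .
  have "k i' \<le> k i"
  proof (cases "i' = i")
    case False then show ?thesis using km i'F iF(1) a(2) by (simp add: strict_mono_onD less_imp_le)
  qed simp
  then show ?thesis using i'F iF(2) unfolding A_def by simp
qed

lemma A_eq: "A j = {..<cnt j}"
  unfolding cnt_def using A_down by (intro downclosed_eq A_fin) blast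

lemma A_sub: "A j \<subseteq> F" unfolding A_def by auto

lemma inj_k: "inj_on k F" using km by (rule strict_mono_on_imp_inj_on)

lemma y_k: "i \<in> F \<Longrightarrow> y (k i) = b i"
  unfolding y_def spread_seq_def using inj_k by (simp add: inv_into_f_f)

lemma y_notk: "n \<notin> k ` F \<Longrightarrow> y n = 0"
  unfolding y_def spread_seq_def by simp

lemma psum_y: "psum y j = T (cnt j)"
proof -
  have "psum y j = sum y ({..<j} \<inter> k ` F)"
    unfolding psum_def by (rule sum.mono_neutral_right) (auto simp: y_notk)
  also have "{..<j} \<inter> k ` F = k ` A j" unfolding A_def by auto
  also have "sum y (k ` A j) = sum (y \<circ> k) (A j)"
    using inj_k A_sub by (intro sum.reindex) (rule inj_on_subset)
  also have "\<dots> = sum b (A j)" using A_sub y_k by (intro sum.cong) auto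
  also have "A j = F \<inter> {..<cnt j}" using A_eq A_sub by auto
  also have "sum b (F \<inter> {..<cnt j}) = T (cnt j)"
  proof (rule tele)
    show "cnt j = 0 \<or> cnt j - 1 \<in> F"
    proof (cases "cnt j = 0")
      case False
      then have "cnt j - 1 \<in> A j" using A_eq by auto
      then show ?thesis using A_sub by auto
    qed simp
  qed
  finally show ?thesis .
qed

lemma cnt_mono: "mono cnt"
proof (rule monoI)
  fix j j' :: nat assume "j \<le> j'"
  then have "A j \<subseteq> A j'" unfolding A_def by auto
  then show "cnt j \<le> cnt j'" unfolding cnt_def using A_fin by (intro card_mono)
qed

lemma T_chain: "sorted d \<Longrightarrow> cvar T d \<le> 1"
proof -
  assume d: "sorted d"
  define pt where "pt N c = (if c \<in> F then lo c else N)" for N c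
  define N0 where "N0 = Max (insert 0 (lo ` (set d \<inter> F)))"
  have le1: "cvar (psum x \<circ> pt N) d \<le> 1" if N: "N \<ge> N0" for N
  proof -
    have "mono_on (set d) (pt N)"
    proof (rule mono_onI)
      fix c c' assume cc: "c \<in> set d" "c' \<in> set d" "c \<le> c'"
      show "pt N c \<le> pt N c'"
      proof (cases "c' \<in> F")
        case True
        then have "c \<in> F" using Fdown cc(3) by blast
        moreover have "lo c \<le> lo c'" using lo_mono[of c c'] True cc(3) by (cases "c = c'") auto
        ultimately show ?thesis using True unfolding pt_def by simp
      next
        case False
        have "lo c \<le> N0" if "c \<in> F" unfolding N0_def using that cc(1) by (intro Max_ge) auto
        then show ?thesis using False N unfolding pt_def by auto
      qed
    qed
    then have "sorted (map (pt N) d)" using d by (intro sorted_map_mono)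
    then have "cvar (psum x) (map (pt N) d) \<le> 1" using chain_le_Jnorm[OF xJ] xn by simp
    then show ?thesis by (simp add: cvar_map)
  qed
  have "(\<lambda>N. cvar (psum x \<circ> pt N) d) \<longlonglongrightarrow> cvar T d"
  proof (rule cvar_tendsto)
    fix c assume "c \<in> set d"
    show "(\<lambda>N. (psum x \<circ> pt N) c) \<longlonglongrightarrow> T c"
    proof (cases "c \<in> F")
      case True then show ?thesis unfolding pt_def T_def by simp
    next
      case False then show ?thesis unfolding pt_def T_def using L_lim by simp
    qed
  qed
  then show "cvar T d \<le> 1" by (rule LIMSEQ_le_const2) (use le1 in blast)
qed

lemma y_chain: "sorted c \<Longrightarrow> cvar (psum y) c \<le> 1"
proof -
  assume c: "sorted c"
  have "psum y = T \<circ> cnt" using psum_y by auto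
  then have "cvar (psum y) c = cvar T (map cnt c)" by (simp add: cvar_map)
  moreover have "sorted (map cnt c)" using c cnt_mono by (intro sorted_map_mono) (auto simp: mono_on_def mono_def)
  ultimately show ?thesis using T_chain by simp
qed

lemma y_conv: "convergent (psum y)"
proof (cases "F = UNIV")
  case True
  have sm: "strict_mono lo" using lo_mono True by (intro strict_monoI) auto
  have T1: "T = psum x \<circ> lo"
  proof
    fix c
    have "c \<in> F" using True by simp
    then show "T c = (psum x \<circ> lo) c" by (simp add: T_def)
  qed
  have l1: "(psum x \<circ> lo) \<longlonglongrightarrow> L" using LIMSEQ_subseq_LIMSEQ[OF L_lim sm] .
  have "filterlim cnt at_top sequentially"
  unfolding filterlim_at_top eventually_sequentially
  proof (intro allI)
    fix Z :: nat
    show "\<exists>N. \<forall>j\<ge>N. Z \<le> cnt j"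
    proof (intro exI allI impI)
      fix j assume "Suc (k Z) \<le> j"
      then have "Z \<in> A j" using True unfolding A_def by auto
      then show "Z \<le> cnt j" using A_eq by auto
    qed
  qed
  then have "((psum x \<circ> lo) \<circ> cnt) \<longlonglongrightarrow> L"
    using l1 unfolding comp_def by (rule filterlim_compose[rotated])
  moreover have "psum y = (psum x \<circ> lo) \<circ> cnt" using psum_y T1 by auto
  ultimately show ?thesis unfolding convergent_def by metis
next
  case False
  then obtain m where m: "m \<ge> 1" "F = {..<m}" using Fshape by auto
  have "eventually (\<lambda>j. psum y j = L) sequentially"
  proof (rule eventually_sequentiallyI[of "Suc (k (m - 1))"])
    fix j assume j: "Suc (k (m - 1)) \<le> j"
    have "A j = F"
    proof
      show "A j \<subseteq> F" by (rule A_sub)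
      show "F \<subseteq> A j"
      proof
        fix i assume i: "i \<in> F"
        have "k i \<le> k (m - 1)"
        proof (cases "i = m - 1")
          case False
          then have "i < m - 1" using i m by auto
          then show ?thesis using km i m by (simp add: strict_mono_onD less_imp_le)
        qed simp
        then show "i \<in> A j" using i j unfolding A_def by auto
      qed
    qed
    moreover have "card F = m" using m(2) by simp
    ultimately have cj: "cnt j = m" unfolding cnt_def by simp
    have "m \<notin> F" using m(2) by simp
    then have "T m = L" by (simp add: T_def)
    then show "psum y j = L" using psum_y[of j] cj by simp
  qed
  then show ?thesis unfolding convergent_def by (blast intro: tendsto_eventually)
qed

lemma y_ball: "y \<in> J_ball"
proof -
  have "y \<in> Jspace" "Jnorm y \<le> sqrt 1" using Jnorm_le_chain[OF y_conv y_chain] by auto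
  then show ?thesis unfolding J_ball_def by simp
qed

lemma sq_le_J: "a \<in> J_ball \<Longrightarrow> (\<Sum>n<N. (a n)\<^sup>2) \<le> 1"
proof -
  assume a: "a \<in> J_ball"
  then have aJ: "a \<in> Jspace" "Jnorm a \<le> 1" unfolding J_ball_def by auto
  have "cvar (psum a) [0..<Suc N] \<le> (Jnorm a)\<^sup>2" by (rule chain_le_Jnorm[OF aJ(1)]) (rule sorted_upt)
  moreover have "(Jnorm a)\<^sup>2 \<le> 1" using aJ(2) Jnorm_nonneg[of a] by (simp add: power_le_one)
  ultimately show ?thesis by (simp only: cvar_upt)
qed

lemma y_extreme: "seq_extreme_point y J_ball"
  unfolding seq_extreme_point_def
proof (intro conjI ballI impI notI)
  show "y \<in> J_ball" by (rule y_ball)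
next
  fix a c assume a: "a \<in> J_ball" and c: "c \<in> J_ball" and ac: "a \<noteq> c"
  assume "\<exists>u. 0 < u \<and> u < 1 \<and> y = (\<lambda>n. (1 - u) * a n + u * c n)"
  then obtain u where u: "0 < u" "u < 1" and yeq: "\<And>n. y n = (1 - u) * a n + u * c n" by auto
  obtain j where j: "a j \<noteq> c j" using ac by auto
  define eta where "eta = u * (1 - u) * (a j - c j)\<^sup>2"
  have eta: "eta > 0" unfolding eta_def using u j by simp
  have upper: "(\<Sum>n<N. (y n)\<^sup>2) \<le> 1 - eta" if N: "N > j" for N
  proof -
    have "(\<Sum>n<N. (y n)\<^sup>2) = (1 - u) * (\<Sum>n<N. (a n)\<^sup>2) + u * (\<Sum>n<N. (c n)\<^sup>2) - u * (1 - u) * (\<Sum>n<N. (a n - c n)\<^sup>2)"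
      unfolding yeq by (simp add: sum_distrib_left sum_subtractf[symmetric] sum.distrib[symmetric] power2_eq_square algebra_simps)
    moreover have "(a j - c j)\<^sup>2 \<le> (\<Sum>n<N. (a n - c n)\<^sup>2)"
      using N by (intro member_le_sum) auto
    moreover have "(1 - u) * (\<Sum>n<N. (a n)\<^sup>2) \<le> (1 - u)" using sq_le_J[OF a] u by (simp add: mult_left_le)
    moreover have "u * (\<Sum>n<N. (c n)\<^sup>2) \<le> u" using sq_le_J[OF c] u by (simp add: mult_left_le)
    moreover have "u * (1 - u) * (a j - c j)\<^sup>2 \<le> u * (1 - u) * (\<Sum>n<N. (a n - c n)\<^sup>2)"
      using calculation(2) u by (intro mult_left_mono) auto
    ultimately show ?thesis unfolding eta_def by linarith
  qed
  obtain F'' where F'': "finite F''" "F'' \<subseteq> F" "sum (\<lambda>i. (b i)\<^sup>2) F'' > 1 - eta"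
  proof -
    have "\<not> (\<forall>F''. finite F'' \<and> F'' \<subseteq> F \<longrightarrow> sum (\<lambda>i. (b i)\<^sup>2) F'' \<le> 1 - eta)"
    proof
      assume "\<forall>F''. finite F'' \<and> F'' \<subseteq> F \<longrightarrow> sum (\<lambda>i. (b i)\<^sup>2) F'' \<le> 1 - eta"
      then have "infsum (\<lambda>i. (b i)\<^sup>2) F \<le> 1 - eta" by (intro infsum_le_finite_sums[OF summ]) auto
      then show False using infsum1 eta by simp
    qed
    then show ?thesis using that by (auto simp: not_le)
  qed
  define N where "N = Suc (max j (Max (insert 0 (k ` F''))))"
  have Nj: "N > j" unfolding N_def by simp
  have sub: "k ` F'' \<subseteq> {..<N}"
  proof
    fix n assume "n \<in> k ` F''"
    then have "n \<le> Max (insert 0 (k ` F''))" using F''(1) by (intro Max_ge) auto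
    then show "n \<in> {..<N}" unfolding N_def by simp
  qed
  have "sum (\<lambda>i. (b i)\<^sup>2) F'' = sum (\<lambda>i. (y (k i))\<^sup>2) F''" using F''(2) y_k by (intro sum.cong) auto
  also have "\<dots> = sum (\<lambda>n. (y n)\<^sup>2) (k ` F'')"
    using inj_on_subset[OF inj_k F''(2)] by (simp add: sum.reindex)
  also have "\<dots> \<le> (\<Sum>n<N. (y n)\<^sup>2)" using sub by (intro sum_mono2) auto
  also have "\<dots> \<le> 1 - eta" using upper[OF Nj] .
  finally show False using F''(3) by simp
qed

end

theorem part2:
  assumes "x \<in> Jspace" "Jnorm x = 1" "norming_family x F II" "strict_mono_on F k"
  shows "seq_extreme_point (spread_seq F k (\<lambda>i. interval_sum x (II i))) J_ball"
proof -
  interpret nfam x F II k using assms by unfold_locales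
  have "(\<lambda>i. interval_sum x (II i)) = b" by (rule ext) (simp add: b_def)
  then show ?thesis using y_extreme unfolding y_def by simp
qed


theorem corollary3p17:
  fixes x :: "nat \<Rightarrow> real"
  assumes "x \<in> Jspace" and "Jnorm x = 1"
  shows "(seq_extreme_point x J_ball \<longrightarrow>
            (\<forall>I. is_interval_nat I \<longrightarrow> Jnorm (restrict_seq x I) = l2norm (restrict_seq x I)))
       \<and> (\<forall>F \<I> (k :: nat \<Rightarrow> nat). norming_family x F \<I> \<and> strict_mono_on F k \<longrightarrow>
            seq_extreme_point (spread_seq F k (\<lambda>i. interval_sum x (\<I> i))) J_ball)"
proof (intro conjI impI allI)
  fix I assume "seq_extreme_point x J_ball" "is_interval_nat I"
  then show "Jnorm (restrict_seq x I) = l2norm (restrict_seq x I)" using part1 assms by blast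
next
  fix F \<I> and k :: "nat \<Rightarrow> nat" assume "norming_family x F \<I> \<and> strict_mono_on F k"
  then show "seq_extreme_point (spread_seq F k (\<lambda>i. interval_sum x (\<I> i))) J_ball"
    using part2 assms by blast
qed

end
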